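(* Let $n,k$ be integers with $2\leq k\leq n-2$. The sparse paving positroids on ground set $[n]$ of rank $k$ are in bijection with the non-adjacent subsets of $[n]$, via the map sending the positroid with Grassmann necklace $(I_1,\dots,I_n)$ to $\{i\in[n]: I_i\neq C_{k,n}^{(i)}\}$.
   Context: A subset $A\subseteq[n]$ is non-adjacent if whenever $i\in A$ we have $i-1\notin A$ and $i+1\notin A$, considered modulo $n$ (so $1$ and $n$ are adjacent). For $t\in[n]$, the order $<_t$ on $[n]$ is $t <_t t+1 <_t \cdots <_t n <_t 1 <_t \cdots <_t t-1$. For $k$-subsets $I=\{a_1<_t\cdots<_t a_k\}$, $J=\{b_1<_t\cdots<_t b_k\}$ write $I\leq_t J$ if $a_i\leq_t b_i$ for all $i$. A positroid of rank $k$ on $[n]$ is a matroid whose bases are $\bigcap_{t=1}^n\{J\in\binom{[n]}{k}: I_t\leq_t J\}$ for some Grassmann necklace $(I_1,\dots,I_n)$, i.e. a sequence of $k$-subsets of $[n]$ with (indices mod $n$) $I_{i+1}=(I_i\setminus\{i\})\cup\{j\}$ for some $j$ if $i\in I_i$, and $I_{i+1}=I_i$ if $i\notin I_i$; then $I_t$ is the $\leq_t$-minimal basis. $C_{k,n}^{(i)}=\{i,i+1,\dots,i+k-1\}$ modulo $n$ with representatives in $[n]$. A rank-$k$ matroid is paving if every circuit has size at least $k$, and sparse paving if it and its dual are paving. *)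

theory Defs
  imports Main
begin

definition nxt :: "nat \<Rightarrow> nat \<Rightarrow> nat" where
  "nxt n i = (if i = n then 1 else i + 1)"

definition prv :: "nat \<Rightarrow> nat \<Rightarrow> nat" where
  "prv n i = (if i = 1 then n else i - 1)"

definition nonadjacent :: "nat \<Rightarrow> nat set \<Rightarrow> bool" where
  "nonadjacent n A \<longleftrightarrow> (\<forall>i\<in>A. nxt n i \<notin> A \<and> prv n i \<notin> A)"

text \<open>Position of a in the order <_t : t, t+1, ..., n, 1, ..., t-1 (positions 0..n-1).\<close>
definition tpos :: "nat \<Rightarrow> nat \<Rightarrow> nat \<Rightarrow> nat" where
  "tpos n t a = (a + n - t) mod n"

definition tsorted :: "nat \<Rightarrow> nat \<Rightarrow> nat set \<Rightarrow> nat list" where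
  "tsorted n t A = sort_key (tpos n t) (sorted_list_of_set A)"

definition gale_le :: "nat \<Rightarrow> nat \<Rightarrow> nat set \<Rightarrow> nat set \<Rightarrow> bool" where
  "gale_le n t I J \<longleftrightarrow> card I = card J \<and>
     (\<forall>i < card I. tpos n t (tsorted n t I ! i) \<le> tpos n t (tsorted n t J ! i))"

definition grassmann_necklace :: "nat \<Rightarrow> nat \<Rightarrow> (nat \<Rightarrow> nat set) \<Rightarrow> bool" where
  "grassmann_necklace n k I \<longleftrightarrow>
     (\<forall>i\<in>{1..n}. I i \<subseteq> {1..n} \<and> card (I i) = k) \<and>
     (\<forall>i\<in>{1..n}. (i \<in> I i \<longrightarrow> (\<exists>j. I (nxt n i) = (I i - {i}) \<union> {j})) \<and>
                  (i \<notin> I i \<longrightarrow> I (nxt n i) = I i))"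

definition matroid_bases :: "'a set \<Rightarrow> 'a set set \<Rightarrow> bool" where
  "matroid_bases E \<B> \<longleftrightarrow> \<B> \<noteq> {} \<and> (\<forall>B\<in>\<B>. B \<subseteq> E) \<and>
     (\<forall>B1\<in>\<B>. \<forall>B2\<in>\<B>. \<forall>x\<in>B1 - B2. \<exists>y\<in>B2 - B1. insert y (B1 - {x}) \<in> \<B>)"

definition indep :: "'a set set \<Rightarrow> 'a set \<Rightarrow> bool" where
  "indep \<B> X \<longleftrightarrow> (\<exists>B\<in>\<B>. X \<subseteq> B)"

definition circuit :: "'a set \<Rightarrow> 'a set set \<Rightarrow> 'a set \<Rightarrow> bool" where
  "circuit E \<B> C \<longleftrightarrow> C \<subseteq> E \<and> \<not> indep \<B> C \<and> (\<forall>D. D \<subset> C \<longrightarrow> indep \<B> D)"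

definition dual_bases :: "'a set \<Rightarrow> 'a set set \<Rightarrow> 'a set set" where
  "dual_bases E \<B> = (\<lambda>B. E - B) ` \<B>"

definition paving :: "'a set \<Rightarrow> nat \<Rightarrow> 'a set set \<Rightarrow> bool" where
  "paving E k \<B> \<longleftrightarrow> (\<forall>C. circuit E \<B> C \<longrightarrow> card C \<ge> k)"

definition sparse_paving :: "'a set \<Rightarrow> nat \<Rightarrow> 'a set set \<Rightarrow> bool" where
  "sparse_paving E k \<B> \<longleftrightarrow> paving E k \<B> \<and> paving E (card E - k) (dual_bases E \<B>)"

definition positroid :: "nat \<Rightarrow> nat \<Rightarrow> nat set set \<Rightarrow> bool" where
  "positroid n k \<B> \<longleftrightarrow> matroid_bases {1..n} \<B> \<and>
     (\<exists>I. grassmann_necklace n k I \<and>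
        \<B> = {J. J \<subseteq> {1..n} \<and> card J = k \<and> (\<forall>t\<in>{1..n}. gale_le n t (I t) J)})"

definition necklace_of :: "nat \<Rightarrow> nat set set \<Rightarrow> nat \<Rightarrow> nat set" where
  "necklace_of n \<B> t = (THE I. I \<in> \<B> \<and> (\<forall>J\<in>\<B>. gale_le n t I J))"

text \<open>C_{k,n}^{(i)} = {i, i+1, ..., i+k-1} mod n, representatives in [n].\<close>
definition cyc :: "nat \<Rightarrow> nat \<Rightarrow> nat \<Rightarrow> nat set" where
  "cyc k n i = {(i + j - 1) mod n + 1 | j. j < k}"

end

theory Submission
  imports Defs
begin


definition elt :: "nat \<Rightarrow> nat \<Rightarrow> nat \<Rightarrow> nat" where
  "elt n t p = (t - 1 + p) mod n + 1"

lemma elt_range: "0 < n \<Longrightarrow> elt n t p \<in> {1..n}"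
  unfolding elt_def by (auto simp: Suc_le_eq)

lemma tpos_lt: "0 < n \<Longrightarrow> tpos n t a < n"
  unfolding tpos_def by simp

lemma tpos_elt: "t \<in> {1..n} \<Longrightarrow> p < n \<Longrightarrow> tpos n t (elt n t p) = p"
proof -
  assume t: "t \<in> {1..n}" and p: "p < n"
  have "tpos n t (elt n t p) = ((t - 1 + p) mod n + 1 + n - t) mod n"
    by (simp add: tpos_def elt_def)
  also have "\<dots> = ((t - 1 + p) mod n + (n + 1 - t)) mod n" using t by auto
  also have "\<dots> = ((t - 1 + p) + (n + 1 - t)) mod n" by (simp add: mod_add_left_eq)
  also have "(t - 1 + p) + (n + 1 - t) = p + n" using t by auto
  finally show ?thesis using p by simp
qed

lemma elt_tpos: "t \<in> {1..n} \<Longrightarrow> a \<in> {1..n} \<Longrightarrow> elt n t (tpos n t a) = a"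
proof -
  assume t: "t \<in> {1..n}" and a: "a \<in> {1..n}"
  have "elt n t (tpos n t a) = (t - 1 + (a + n - t) mod n) mod n + 1"
    by (simp add: tpos_def elt_def)
  also have "\<dots> = (t - 1 + (a + n - t)) mod n + 1" by (simp add: mod_add_right_eq)
  also have "t - 1 + (a + n - t) = (a - 1) + n" using t a by auto
  finally show ?thesis using a by auto
qed

lemma elt_mod: "elt n t (p mod n) = elt n t p"
  unfolding elt_def by (simp add: mod_add_right_eq)

lemma elt_eq_iff: "elt n t p = elt n t q \<longleftrightarrow> p mod n = q mod n"
proof -
  have "elt n t p = elt n t q \<longleftrightarrow> (t - 1 + p) mod n = (t - 1 + q) mod n"
    unfolding elt_def by simp
  also have "\<dots> \<longleftrightarrow> p mod n = q mod n"
    by (simp add: nat_mod_eq_iff)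
  finally show ?thesis .
qed

lemma tpos_inj: "t \<in> {1..n} \<Longrightarrow> inj_on (tpos n t) {1..n}"
  by (metis elt_tpos inj_onI)

lemma elt_inj: "t \<in> {1..n} \<Longrightarrow> inj_on (elt n t) {0..<n}"
  by (metis atLeastLessThan_iff inj_onI tpos_elt)

lemma cyc_elt: "1 \<le> t \<Longrightarrow> cyc k n t = elt n t ` {0..<k}"
  unfolding cyc_def elt_def by (auto simp: image_def)

lemma elt_nxt: "t \<in> {1..n} \<Longrightarrow> elt n (nxt n t) p = elt n t (Suc p)"
proof -
  assume t: "t \<in> {1..n}"
  show ?thesis
  proof (cases "t = n")
    case True
    then show ?thesis using t by (simp add: elt_def nxt_def mod_add_left_eq[symmetric])
  next
    case False
    then show ?thesis using t by (simp add: elt_def nxt_def)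
  qed
qed

lemma nxt_elt: "t \<in> {1..n} \<Longrightarrow> nxt n t = elt n t 1"
  by (auto simp: elt_def nxt_def)

lemma prv_elt: "t \<in> {1..n} \<Longrightarrow> prv n t = elt n t (n - 1)"
proof -
  assume t: "t \<in> {1..n}"
  show ?thesis
  proof (cases "t = 1")
    case True
    then show ?thesis using t by (simp add: elt_def prv_def)
  next
    case False
    have "elt n t (n - 1) = (t - 1 + (n - 1)) mod n + 1" by (simp add: elt_def)
    also have "t - 1 + (n - 1) = (t - 2) + n" using t False by auto
    also have "((t - 2) + n) mod n = t - 2" using t by auto
    finally have "elt n t (n - 1) = t - 2 + 1" .
    moreover have "prv n t = t - 2 + 1" unfolding prv_def using t False by auto
    ultimately show ?thesis by simp
  qed
qed

lemma elt_shift: "a \<in> {1..n} \<Longrightarrow> b \<in> {1..n} \<Longrightarrow> elt n b j = elt n a (tpos n a b + j)"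
proof -
  assume a: "a \<in> {1..n}" and b: "b \<in> {1..n}"
  have "elt n a (tpos n a b + j) = (a - 1 + ((b + n - a) mod n + j)) mod n + 1"
    by (simp add: elt_def tpos_def)
  also have "\<dots> = (a - 1 + (b + n - a + j)) mod n + 1"
    by (metis mod_add_left_eq mod_add_right_eq)
  also have "a - 1 + (b + n - a + j) = (b - 1 + j) + n" using a b by auto
  finally show ?thesis by (simp add: elt_def)
qed

lemma tpos_image_elt: "t \<in> {1..n} \<Longrightarrow> S \<subseteq> {0..<n} \<Longrightarrow> tpos n t ` elt n t ` S = S"
  by (auto simp: image_iff tpos_elt subset_iff)

lemma elt_image_tpos: "t \<in> {1..n} \<Longrightarrow> J \<subseteq> {1..n} \<Longrightarrow> elt n t ` tpos n t ` J = J"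
  by (auto simp: image_iff subset_iff elt_tpos)



lemma tsorted_map:
  assumes t: "t \<in> {1..n}" and J: "J \<subseteq> {1..n}"
  shows "map (tpos n t) (tsorted n t J) = sorted_list_of_set (tpos n t ` J)"
proof -
  have fin: "finite J" using J finite_subset by blast
  have inj: "inj_on (tpos n t) J" using tpos_inj[OF t] J inj_on_subset by blast
  have "sorted_wrt (<) (map (tpos n t) (tsorted n t J))"
    unfolding strict_sorted_iff tsorted_def
    using fin inj by (auto simp: distinct_map)
  moreover have "set (map (tpos n t) (tsorted n t J)) = tpos n t ` J"
    using fin by (simp add: tsorted_def)
  moreover have "length (map (tpos n t) (tsorted n t J)) = card (tpos n t ` J)"
    using fin inj by (simp add: tsorted_def card_image)
  ultimately have "sorted_list_of_set (tpos n t ` J) = map (tpos n t) (tsorted n t J)"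
    using fin by (subst sorted_list_of_set_unique[symmetric]) auto
  then show ?thesis by simp
qed

lemma length_tsorted: "finite J \<Longrightarrow> length (tsorted n t J) = card J"
  by (simp add: tsorted_def)

lemma gale_iff:
  assumes t: "t \<in> {1..n}" and I: "I \<subseteq> {1..n}" and J: "J \<subseteq> {1..n}"
  shows "gale_le n t I J \<longleftrightarrow> card I = card J \<and>
    (\<forall>i<card I. sorted_list_of_set (tpos n t ` I) ! i \<le> sorted_list_of_set (tpos n t ` J) ! i)"
proof -
  have fI: "finite I" "finite J" using I J finite_subset by blast+
  have "tpos n t (tsorted n t I ! i) = sorted_list_of_set (tpos n t ` I) ! i" if "i < card I" for i
    using tsorted_map[OF t I] that fI length_tsorted[of I n t]
    by (metis nth_map)
  moreover have "tpos n t (tsorted n t J ! i) = sorted_list_of_set (tpos n t ` J) ! i"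
    if "i < card J" for i
    using tsorted_map[OF t J] that fI length_tsorted[of J n t]
    by (metis nth_map)
  ultimately show ?thesis unfolding gale_le_def by auto
qed

lemma gale_trans: "gale_le n t I J \<Longrightarrow> gale_le n t J K \<Longrightarrow> gale_le n t I K"
  unfolding gale_le_def by (metis le_trans)

lemma strict_nth_ge: "sorted_wrt (<) (xs::nat list) \<Longrightarrow> i < length xs \<Longrightarrow> i \<le> xs ! i"
proof (induction i)
  case 0
  then show ?case by simp
next
  case (Suc i)
  then have "xs ! i < xs ! Suc i" using sorted_wrt_nth_less by blast
  then show ?case using Suc by auto
qed

lemma gale_antisym:
  assumes t: "t \<in> {1..n}" and I: "I \<subseteq> {1..n}" and J: "J \<subseteq> {1..n}"
    and "gale_le n t I J" "gale_le n t J I"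
  shows "I = J"
proof -
  have fI: "finite I" "finite J" using I J finite_subset by blast+
  have c: "card I = card J" and le1: "\<forall>i<card I. sorted_list_of_set (tpos n t ` I) ! i \<le> sorted_list_of_set (tpos n t ` J) ! i"
    and le2: "\<forall>i<card J. sorted_list_of_set (tpos n t ` J) ! i \<le> sorted_list_of_set (tpos n t ` I) ! i"
    using assms gale_iff[OF t I J] gale_iff[OF t J I] by auto
  have injI: "inj_on (tpos n t) I" using tpos_inj[OF t] I inj_on_subset by blast
  have injJ: "inj_on (tpos n t) J" using tpos_inj[OF t] J inj_on_subset by blast
  have "sorted_list_of_set (tpos n t ` I) = sorted_list_of_set (tpos n t ` J)"
    apply (rule nth_equalityI)
    using fI c injI injJ le1 le2 by (auto simp: card_image intro: antisym)
  then have "tpos n t ` I = tpos n t ` J"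
    using fI by (metis finite_imageI sorted_list_of_set.set_sorted_key_list_of_set)
  then show ?thesis using tpos_inj[OF t] I J by (metis inj_on_image_eq_iff)
qed

lemma dom_range:
  assumes "finite T" "card T = k" "i < k"
  shows "sorted_list_of_set {0..<k} ! i \<le> sorted_list_of_set T ! i"
  using assms strict_nth_ge[of "sorted_list_of_set T" i] by simp

lemma sl_gap: "1 \<le> k \<Longrightarrow> sorted_list_of_set (insert k {0..<k-1}) = [0..<k-1] @ [k]"
  by (subst sorted_list_of_set_unique[symmetric]) (auto simp: sorted_wrt_append)

lemma dom_gap:
  assumes fin: "finite T" and c: "card T = k" and k: "1 \<le> k"
  shows "(\<forall>i<k. sorted_list_of_set (insert k {0..<k-1}) ! i \<le> sorted_list_of_set T ! i)
     \<longleftrightarrow> T \<noteq> {0..<k}"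
  unfolding sl_gap[OF k]
proof
  assume H: "\<forall>i<k. ([0..<k-1] @ [k]) ! i \<le> sorted_list_of_set T ! i"
  show "T \<noteq> {0..<k}"
  proof
    assume "T = {0..<k}"
    then show False using H[rule_format, of "k-1"] k by (simp add: nth_append)
  qed
next
  assume ne: "T \<noteq> {0..<k}"
  let ?L = "sorted_list_of_set T"
  have len: "length ?L = k" using fin c by simp
  have st: "sorted_wrt (<) ?L" by simp
  have last: "k \<le> ?L ! (k-1)"
  proof (rule ccontr)
    assume "\<not> k \<le> ?L ! (k-1)"
    then have lt: "?L ! (k-1) < k" by simp
    have "T \<subseteq> {0..<k}"
    proof
      fix x assume "x \<in> T"
      then have "x \<in> set ?L" using fin by simp
      then obtain j where j: "j < k" "x = ?L ! j" using len by (auto simp: in_set_conv_nth)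
      have "?L ! j \<le> ?L ! (k-1)"
        using sorted_nth_mono[of ?L j "k-1"] j len k by simp
      then show "x \<in> {0..<k}" using j lt by simp
    qed
    then have "T = {0..<k}" using c by (simp add: card_subset_eq)
    then show False using ne by simp
  qed
  show "\<forall>i<k. ([0..<k-1] @ [k]) ! i \<le> ?L ! i"
  proof (intro allI impI)
    fix i assume i: "i < k"
    show "([0..<k-1] @ [k]) ! i \<le> ?L ! i"
    proof (cases "i < k - 1")
      case True
      then show ?thesis using strict_nth_ge[OF st, of i] i len k by (simp add: nth_append)
    next
      case False
      then have "i = k - 1" using i by simp
      then show ?thesis using last k by (simp add: nth_append)
    qed
  qed
qed

lemma dom_swap:
  assumes fin: "finite (T::nat set)" and q: "q \<in> T" "1 \<le> q" "q - 1 \<notin> T"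
  shows "card (insert (q-1) (T - {q})) = card T \<and>
    (\<forall>i<card T. sorted_list_of_set (insert (q-1) (T - {q})) ! i \<le> sorted_list_of_set T ! i)"
proof -
  define g where "g = (\<lambda>y::nat. if y = q then q - 1 else y)"
  have "card T > 0" using fin q card_gt_0_iff by blast
  then have c: "card (insert (q-1) (T - {q})) = card T"
    using fin q by (simp add: card_Diff_singleton)
  have mono: "g x < g y" if "x \<in> T" "y \<in> T" "x < y" for x y
  proof (cases "x = q")
    case True
    then show ?thesis using that q by (auto simp: g_def)
  next
    case False
    then have "x \<noteq> q - 1" using that q by auto
    then show ?thesis using that q False by (auto simp: g_def)
  qed
  have "sorted_wrt (\<lambda>x y. g x < g y) (sorted_list_of_set T)"
    by (rule sorted_wrt_mono_rel[of _ "(<)"]) (use fin mono in auto)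
  then have sw: "sorted_wrt (<) (map g (sorted_list_of_set T))"
    unfolding sorted_wrt_map .
  have "g ` T = insert (q-1) (T - {q})" using q by (auto simp: g_def image_def)
  then have "sorted_list_of_set (insert (q-1) (T - {q})) = map g (sorted_list_of_set T)"
    using sw c fin by (subst sorted_list_of_set_unique[symmetric]) auto
  then show ?thesis using c fin by (auto simp: g_def)
qed



definition gap :: "nat \<Rightarrow> nat \<Rightarrow> nat \<Rightarrow> nat set" where
  "gap n k t = elt n t ` insert k {0..<k-1}"

lemma cyc_sub: "t \<in> {1..n} \<Longrightarrow> cyc k n t \<subseteq> {1..n}"
  using cyc_elt[of t k n] elt_range[of n t] by auto

lemma card_cyc: "t \<in> {1..n} \<Longrightarrow> k \<le> n \<Longrightarrow> card (cyc k n t) = k"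
  using cyc_elt[of t k n] elt_inj[of t n] by (simp add: card_image inj_on_subset)

lemma tpos_cyc: "t \<in> {1..n} \<Longrightarrow> k \<le> n \<Longrightarrow> tpos n t ` cyc k n t = {0..<k}"
  using cyc_elt[of t k n] tpos_image_elt[of t n "{0..<k}"] by auto

lemma gap_sub: "t \<in> {1..n} \<Longrightarrow> gap n k t \<subseteq> {1..n}"
  using elt_range[of n t] unfolding gap_def by auto

lemma card_gap: "t \<in> {1..n} \<Longrightarrow> 1 \<le> k \<Longrightarrow> k < n \<Longrightarrow> card (gap n k t) = k"
proof -
  assume t: "t \<in> {1..n}" and k: "1 \<le> k" "k < n"
  have "inj_on (elt n t) (insert k {0..<k-1})"
    by (rule inj_on_subset[OF elt_inj[OF t]]) (use k in auto)
  then show ?thesis using k unfolding gap_def by (simp add: card_image)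
qed

lemma tpos_gap: "t \<in> {1..n} \<Longrightarrow> k < n \<Longrightarrow> tpos n t ` gap n k t = insert k {0..<k-1}"
  unfolding gap_def by (rule tpos_image_elt) auto

lemma cyc_iff_tpos:
  assumes t: "t \<in> {1..n}" and J: "J \<subseteq> {1..n}" and k: "k \<le> n"
  shows "J = cyc k n t \<longleftrightarrow> tpos n t ` J = {0..<k}"
proof
  assume "J = cyc k n t" then show "tpos n t ` J = {0..<k}" using tpos_cyc[OF t k] by simp
next
  assume "tpos n t ` J = {0..<k}"
  then have "elt n t ` tpos n t ` J = elt n t ` {0..<k}" by simp
  then show "J = cyc k n t" using elt_image_tpos[OF t J] cyc_elt[of t k n] t by simp
qed

lemma gale_cyc:
  assumes t: "t \<in> {1..n}" and J: "J \<subseteq> {1..n}" and c: "card J = k" and k: "k \<le> n"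
  shows "gale_le n t (cyc k n t) J"
proof -
  have fin: "finite J" using J finite_subset by blast
  have cT: "card (tpos n t ` J) = k"
    using c tpos_inj[OF t] J by (metis card_image inj_on_subset)
  show ?thesis
    unfolding gale_iff[OF t cyc_sub[OF t] J] tpos_cyc[OF t k] card_cyc[OF t k]
    using c dom_range[OF finite_imageI[OF fin] cT] by simp
qed

lemma gale_gap:
  assumes t: "t \<in> {1..n}" and J: "J \<subseteq> {1..n}" and c: "card J = k" and k: "1 \<le> k" "k < n"
  shows "gale_le n t (gap n k t) J \<longleftrightarrow> J \<noteq> cyc k n t"
proof -
  have fin: "finite J" using J finite_subset by blast
  have cT: "card (tpos n t ` J) = k"
    using c tpos_inj[OF t] J by (metis card_image inj_on_subset)
  have "gale_le n t (gap n k t) J \<longleftrightarrow> tpos n t ` J \<noteq> {0..<k}"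
    unfolding gale_iff[OF t gap_sub[OF t] J] tpos_gap[OF t k(2)] card_gap[OF t k]
    using c dom_gap[OF finite_imageI[OF fin] cT k(1)] by simp
  then show ?thesis using cyc_iff_tpos[OF t J, of k] k by simp
qed

lemma gale_swap:
  assumes t: "t \<in> {1..n}" and J: "J \<subseteq> {1..n}" and c: "card J = k" and k: "k \<le> n"
    and ne: "J \<noteq> cyc k n t"
  shows "\<exists>j\<in>J. \<exists>x\<in>{1..n} - J. gale_le n t (insert x (J - {j})) J"
proof -
  have fin: "finite J" using J finite_subset by blast
  define T where "T = tpos n t ` J"
  have inj: "inj_on (tpos n t) {1..n}" using tpos_inj[OF t] .
  have cT: "card T = k" unfolding T_def
    using c inj J by (metis card_image inj_on_subset)
  have Tn: "T \<subseteq> {0..<n}" unfolding T_def using tpos_lt[of n t] t by auto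
  have neT: "T \<noteq> {0..<k}" using cyc_iff_tpos[OF t J k] ne T_def by simp
  obtain m where m: "m < k" "m \<notin> T"
  proof -
    have "\<not> {0..<k} \<subseteq> T"
    proof
      assume "{0..<k} \<subseteq> T"
      then have "{0..<k} = T" using cT fin T_def by (simp add: card_subset_eq)
      then show False using neT by simp
    qed
    then obtain m where "m \<in> {0..<k}" "m \<notin> T" by blast
    then show ?thesis using that by simp
  qed
  have ex: "\<exists>q. q \<in> T \<and> m < q"
  proof (rule ccontr)
    assume "\<not> (\<exists>q. q \<in> T \<and> m < q)"
    then have "T \<subseteq> {0..<m}" using m by (auto simp: not_less le_less)
    then have "card T \<le> m" using card_mono[of "{0..<m}" T] by simp
    then show False using cT m by simp
  qed
  define q where "q = (LEAST q. q \<in> T \<and> m < q)"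
  have q: "q \<in> T" "m < q" using LeastI_ex[OF ex] q_def by auto
  have q1: "q - 1 \<notin> T"
  proof
    assume H: "q - 1 \<in> T"
    have "q - 1 \<noteq> m" using H m by auto
    then have "m < q - 1" using q by auto
    then have "q \<le> q - 1" using Least_le[of "\<lambda>q. q \<in> T \<and> m < q" "q-1"] H q_def by auto
    then show False using q by auto
  qed
  have qn: "q < n" using q Tn by auto
  define j where "j = elt n t q"
  define x where "x = elt n t (q - 1)"
  have jJ: "j \<in> J" using q T_def j_def elt_tpos[OF t] J by auto
  have xn: "x \<in> {1..n}" using elt_range[of n t] qn x_def by auto
  have xJ: "x \<notin> J"
  proof
    assume "x \<in> J"
    then have "tpos n t x \<in> T" using T_def by auto
    moreover have "tpos n t x = q - 1" using x_def tpos_elt[OF t] qn by auto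
    ultimately show False using q1 by simp
  qed
  have tx: "tpos n t x = q - 1" using x_def tpos_elt[OF t] qn by auto
  have tj: "tpos n t j = q" using j_def tpos_elt[OF t] qn by auto
  let ?J' = "insert x (J - {j})"
  have J'sub: "?J' \<subseteq> {1..n}" using xn J by auto
  have imJ': "tpos n t ` ?J' = insert (q-1) (T - {q})"
  proof -
    have "tpos n t ` (J - {j}) = tpos n t ` J - tpos n t ` {j}"
      by (rule inj_on_image_set_diff[OF inj]) (use J jJ in auto)
    then have "tpos n t ` (J - {j}) = T - {q}"
      unfolding T_def using tj by simp
    then show ?thesis using tx by simp
  qed
  have cJ': "card ?J' = k" using c jJ xJ fin
    by (metis card.insert card_Diff1_less card_Suc_Diff1 card_gt_0_iff finite_Diff insert_Diff
        insert_absorb insert_iff)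
  have ds: "card (insert (q-1) (T - {q})) = card T \<and>
    (\<forall>i<card T. sorted_list_of_set (insert (q-1) (T - {q})) ! i \<le> sorted_list_of_set T ! i)"
    using dom_swap[of T q] fin T_def q q1 by auto
  have "gale_le n t ?J' J"
    unfolding gale_iff[OF t J'sub J] imJ' using cJ' c cT ds T_def by auto
  then show ?thesis using jJ xn xJ by blast
qed



definition far :: "'a set \<Rightarrow> nat \<Rightarrow> 'a set set \<Rightarrow> bool" where
  "far E r F \<longleftrightarrow> (\<forall>Z x y. Z \<subseteq> E \<and> card Z = r - 1 \<and> x \<in> E - Z \<and> y \<in> E - Z \<and> x \<noteq> y
      \<longrightarrow> insert x Z \<notin> F \<or> insert y Z \<notin> F)"

definition relax :: "'a set \<Rightarrow> nat \<Rightarrow> 'a set set \<Rightarrow> 'a set set" where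
  "relax E r F = {Y. Y \<subseteq> E \<and> card Y = r \<and> Y \<notin> F}"

lemma two_elems:
  assumes "finite S" "2 \<le> card S"
  obtains x y where "x \<in> S" "y \<in> S" "x \<noteq> y"
proof -
  have "S \<noteq> {}" using assms by auto
  then obtain x where x: "x \<in> S" by blast
  have "card (S - {x}) \<ge> 1" using assms x by (simp add: card_Diff_singleton)
  then have "S - {x} \<noteq> {}" by (metis card.empty le_zero_eq one_neq_zero)
  then obtain y where "y \<in> S - {x}" by blast
  then show ?thesis using that x by blast
qed

lemma relax_indep:
  assumes fin: "finite E" and r: "r + 1 \<le> card E" and far: "far E r F"
    and X: "X \<subseteq> E" "card X < r"
  shows "indep (relax E r F) X"
proof -
  have "\<exists>Z. X \<subseteq> Z \<and> Z \<subseteq> E \<and> card Z = r - 1"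
    by (rule exists_subset_between) (use X fin r in auto)
  then obtain Z where Z: "X \<subseteq> Z" "Z \<subseteq> E" "card Z = r - 1" by blast
  have fZ: "finite Z" using Z fin finite_subset by blast
  have "card (E - Z) \<ge> 2" using Z r fin X by (simp add: card_Diff_subset fZ)
  then obtain x y where xy: "x \<in> E - Z" "y \<in> E - Z" "x \<noteq> y"
    using two_elems[of "E - Z"] fin by blast
  have o: "insert x Z \<notin> F \<or> insert y Z \<notin> F" using far xy Z unfolding far_def by blast
  have cx: "card (insert x Z) = r" using xy fZ Z X by auto
  have cy: "card (insert y Z) = r" using xy fZ Z X by auto
  show ?thesis
    unfolding indep_def relax_def using o cx cy xy Z by blast
qed

lemma relax_paving:
  assumes fin: "finite E" and r: "r + 1 \<le> card E" and far: "far E r F"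
  shows "paving E r (relax E r F)"
  unfolding paving_def circuit_def
  using relax_indep[OF fin r far] by (meson not_le)

lemma card_diff_sym:
  assumes "finite A" "finite B" "card A = card B"
  shows "card (A - B) = card (B - A)"
  using card_Diff_subset_Int[of A B] card_Diff_subset_Int[of B A] assms by (simp add: Int_commute)

lemma relax_bases:
  assumes fin: "finite E" and r: "r + 1 \<le> card E" and r1: "1 \<le> r" and far: "far E r F"
  shows "matroid_bases E (relax E r F)"
proof -
  have ne: "relax E r F \<noteq> {}"
    using relax_indep[OF fin r far, of "{}"] r1 unfolding indep_def by auto
  have ex: "\<exists>y\<in>B2 - B1. insert y (B1 - {x}) \<in> relax E r F"
    if B1: "B1 \<in> relax E r F" and B2: "B2 \<in> relax E r F" and x: "x \<in> B1 - B2" for B1 B2 x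
  proof -
    have s1: "B1 \<subseteq> E" "card B1 = r" and s2: "B2 \<subseteq> E" "card B2 = r"
      using B1 B2 unfolding relax_def by auto
    have f1: "finite B1" "finite B2" using s1 s2 fin finite_subset by blast+
    have cd: "card (B2 - B1) = card (B1 - B2)" using card_diff_sym[OF f1(2) f1(1)] s1 s2 by simp
    have "card (B1 - B2) > 0" using x f1 card_gt_0_iff by blast
    then have "card (B1 - B2) \<ge> 1" by simp
    show ?thesis
    proof (cases "card (B2 - B1) \<ge> 2")
      case True
      then obtain y1 y2 where y: "y1 \<in> B2 - B1" "y2 \<in> B2 - B1" "y1 \<noteq> y2"
        using two_elems[of "B2 - B1"] f1 by blast
      let ?Z = "B1 - {x}"
      have cZ: "card ?Z = r - 1" using x s1 f1 by simp
      have "insert y1 ?Z \<notin> F \<or> insert y2 ?Z \<notin> F"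
        using far[unfolded far_def, rule_format, of ?Z y1 y2] cZ y s1 s2 by auto
      moreover have "card (insert y1 ?Z) = r" "card (insert y2 ?Z) = r"
        using y cZ f1 x r1 by auto
      ultimately show ?thesis unfolding relax_def using y s1 s2 by blast
    next
      case False
      then have "card (B2 - B1) = 1" using cd \<open>card (B1 - B2) \<ge> 1\<close> by simp
      then obtain y where y: "B2 - B1 = {y}" by (auto simp: card_Suc_eq)
      have "card (B1 - B2) = 1" using cd \<open>card (B2 - B1) = 1\<close> by simp
      then obtain b where "B1 - B2 = {b}" by (auto simp: card_Suc_eq)
      then have xx: "B1 - B2 = {x}" using x by simp
      have "insert y (B1 - {x}) = B2" using xx y by blast
      then show ?thesis using y B2 by auto
    qed
  qed
  show ?thesis unfolding matroid_bases_def using ne ex by (auto simp: relax_def)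
qed

lemma dual_relax:
  assumes fin: "finite E" and rE: "r \<le> card E"
  shows "dual_bases E (relax E r F) = relax E (card E - r) {Y. E - Y \<in> F}"
proof
  show "dual_bases E (relax E r F) \<subseteq> relax E (card E - r) {Y. E - Y \<in> F}"
    unfolding dual_bases_def relax_def using fin
    by (auto simp: card_Diff_subset double_diff finite_subset)
next
  show "relax E (card E - r) {Y. E - Y \<in> F} \<subseteq> dual_bases E (relax E r F)"
  proof
    fix Y assume Y: "Y \<in> relax E (card E - r) {Y. E - Y \<in> F}"
    then have Ys: "Y \<subseteq> E" "card Y = card E - r" "E - Y \<notin> F" unfolding relax_def by auto
    have "card (E - Y) = r"
    proof -
      have "card (E - Y) = card E - card Y" using Ys fin by (simp add: card_Diff_subset finite_subset)
      moreover have "card Y \<le> card E" using Ys fin card_mono by blast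
      ultimately show ?thesis using Ys rE by simp
    qed
    then have "E - Y \<in> relax E r F" using Ys unfolding relax_def by auto
    moreover have "Y = E - (E - Y)" using Ys by auto
    ultimately show "Y \<in> dual_bases E (relax E r F)" unfolding dual_bases_def by blast
  qed
qed



lemma far_dual:
  assumes fin: "finite E" and r: "r + 1 \<le> card E" and far: "far E r F"
  shows "far E (card E - r) {Y. E - Y \<in> F}"
  unfolding far_def
proof (intro allI impI)
  fix Z x y
  assume H: "Z \<subseteq> E \<and> card Z = card E - r - 1 \<and> x \<in> E - Z \<and> y \<in> E - Z \<and> x \<noteq> y"
  define Z' where "Z' = E - Z - {x, y}"
  have fZ: "finite Z" using H fin finite_subset by blast
  have "card Z' = card (E - Z) - 2"
    unfolding Z'_def using H fin by (simp add: card_Diff_subset)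
  also have "card (E - Z) = card E - card Z" using H fZ by (simp add: card_Diff_subset)
  finally have cZ': "card Z' = r - 1" using H r by simp
  have e1: "E - insert x Z = insert y Z'" using H unfolding Z'_def by blast
  have e2: "E - insert y Z = insert x Z'" using H unfolding Z'_def by blast
  have "Z' \<subseteq> E" "y \<in> E - Z'" "x \<in> E - Z'" unfolding Z'_def using H by auto
  then have "insert y Z' \<notin> F \<or> insert x Z' \<notin> F"
    using far[unfolded far_def, rule_format, of Z' y x] cZ' H by blast
  then show "insert x Z \<notin> {Y. E - Y \<in> F} \<or> insert y Z \<notin> {Y. E - Y \<in> F}"
    using e1 e2 by auto
qed

lemma relax_sparse:
  assumes fin: "finite E" and r: "r + 1 \<le> card E" and r1: "1 \<le> r" and far: "far E r F"
  shows "matroid_bases E (relax E r F) \<and> sparse_paving E r (relax E r F)"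
proof -
  have "paving E (card E - r) (relax E (card E - r) {Y. E - Y \<in> F})"
    by (rule relax_paving[OF fin _ far_dual[OF fin r far]]) (use r r1 in simp)
  then show ?thesis
    unfolding sparse_paving_def
    using relax_bases[OF fin r r1 far] relax_paving[OF fin r far] dual_relax[OF fin, of r F] r
    by simp
qed

lemma small_indep:
  assumes pav: "paving E r B" and X: "X \<subseteq> E" "finite X" "card X < r"
  shows "indep B X"
proof (rule ccontr)
  assume nX: "\<not> indep B X"
  let ?P = "\<lambda>m. \<exists>D. D \<subseteq> X \<and> \<not> indep B D \<and> card D = m"
  have "\<exists>m. ?P m" using nX by blast
  then obtain m where m: "?P m" and mmin: "\<And>m'. m' < m \<Longrightarrow> \<not> ?P m'"
    using exists_least_iff[of ?P] by blast
  then obtain D where D: "D \<subseteq> X" "\<not> indep B D" "card D = m" by blast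
  have "circuit E B D"
    unfolding circuit_def
  proof (intro conjI allI impI)
    show "D \<subseteq> E" using D X by blast
    show "\<not> indep B D" using D by blast
    fix D' assume "D' \<subset> D"
    moreover have "finite D" using D X finite_subset by blast
    ultimately have "card D' < card D" using psubset_card_mono by blast
    then show "indep B D'" using mmin D \<open>D' \<subset> D\<close> by blast
  qed
  then have "card D \<ge> r" using pav unfolding paving_def by blast
  moreover have "card D \<le> card X" using D X card_mono by blast
  ultimately show False using X by simp
qed

lemma sparse_far:
  assumes fin: "finite E" and mb: "matroid_bases E B" and cB: "\<forall>Y\<in>B. card Y = r"
    and sp: "sparse_paving E r B" and r1: "1 \<le> r" and r: "r + 1 \<le> card E"
    and Z: "Z \<subseteq> E" "card Z = r - 1" and xy: "x \<in> E - Z" "y \<in> E - Z" "x \<noteq> y"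
  shows "insert x Z \<in> B \<or> insert y Z \<in> B"
proof (rule ccontr)
  assume nb: "\<not> (insert x Z \<in> B \<or> insert y Z \<in> B)"
  have BE: "\<forall>B'\<in>B. B' \<subseteq> E" using mb unfolding matroid_bases_def by (elim conjE)
  have exch: "\<forall>B1\<in>B. \<forall>B2\<in>B. \<forall>x\<in>B1 - B2. \<exists>y\<in>B2 - B1. insert y (B1 - {x}) \<in> B"
    using mb unfolding matroid_bases_def by (elim conjE)
  have fZ: "finite Z" using Z fin finite_subset by blast
  have pav: "paving E r B" and pavd: "paving E (card E - r) (dual_bases E B)"
    using sp unfolding sparse_paving_def by auto
  have "indep B Z" using small_indep[OF pav Z(1) fZ] Z r1 by simp
  then obtain B' where B': "B' \<in> B" "Z \<subseteq> B'" unfolding indep_def by blast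
  have "B' \<subseteq> E" using BE B' by blast
  then have fB': "finite B'" using fin finite_subset by blast
  have cB': "card B' = r" using cB B' by blast
  have "card (B' - Z) = card B' - card Z" using B' fZ by (simp add: card_Diff_subset)
  then have "card (B' - Z) = 1" using cB' Z r1 by simp
  then obtain c where c: "B' - Z = {c}" by (auto simp: card_Suc_eq)
  have B'eq: "B' = insert c Z" using c B' by blast
  have cZ: "c \<notin> Z" using c by blast
  have cx: "c \<noteq> x" "c \<noteq> y" using nb B'(1) B'eq by auto
  let ?W = "insert x (insert y Z)"
  have WE: "?W \<subseteq> E" using Z xy by auto
  have cW: "card ?W = r + 1" using fZ Z xy r1 by auto
  have "finite ?W" using fZ by simp
  then have "card (E - ?W) = card E - card ?W" using card_Diff_subset WE by blast
  then have "card (E - ?W) < card E - r" using cW r by simp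
  moreover have "E - ?W \<subseteq> E" "finite (E - ?W)" using fin by auto
  ultimately have "indep (dual_bases E B) (E - ?W)"
    using small_indep[OF pavd] by blast
  then obtain D where D: "D \<in> dual_bases E B" "E - ?W \<subseteq> D" unfolding indep_def by blast
  then obtain B0 where B0: "B0 \<in> B" "D = E - B0" unfolding dual_bases_def by blast
  have B0E: "B0 \<subseteq> E" using B0 BE by blast
  have B0W: "B0 \<subseteq> ?W" using B0 B0E D by blast
  have "c \<in> B' - B0" using B0W cx cZ B'eq by auto
  then obtain y' where y': "y' \<in> B0 - B'" "insert y' (B' - {c}) \<in> B"
    using exch B'(1) B0(1) by blast
  have "B' - {c} = Z" using B'eq cZ by auto
  moreover have "y' = x \<or> y' = y" using y' B0W B'eq by auto
  ultimately show False using y' nb by auto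
qed



lemma elt_0: "i \<in> {1..n} \<Longrightarrow> elt n i 0 = i"
  unfolding elt_def by auto

context
  fixes n k :: nat
  assumes k2: "2 \<le> k" and kn: "k + 2 \<le> n"
begin

lemma nonadj_pos:
  assumes A: "A \<subseteq> {1..n}" "nonadjacent n A" and ab: "a \<in> A" "b \<in> A" "a \<noteq> b"
  shows "2 \<le> tpos n a b \<and> tpos n a b \<le> n - 2"
proof -
  have an: "a \<in> {1..n}" "b \<in> {1..n}" using A ab by auto
  define d where "d = tpos n a b"
  have dn: "d < n" using tpos_lt[of n a b] kn d_def by simp
  have bd: "b = elt n a d" using elt_tpos[OF an] d_def by simp
  have "d \<noteq> 0"
  proof
    assume "d = 0" then have "b = a" using bd elt_0[OF an(1)] by simp
    then show False using ab by simp
  qed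
  moreover have "d \<noteq> 1" using bd nxt_elt[OF an(1)] A ab unfolding nonadjacent_def by auto
  moreover have "d \<noteq> n - 1" using bd prv_elt[OF an(1)] A ab unfolding nonadjacent_def by auto
  ultimately show ?thesis using dn d_def by auto
qed

lemma cyc_shift:
  assumes an: "a \<in> {1..n}" "b \<in> {1..n}"
  shows "cyc k n b = elt n a ` {tpos n a b..<tpos n a b + k}"
proof -
  define d where "d = tpos n a b"
  have e: "\<And>j. elt n b j = elt n a (d + j)" using elt_shift[OF an] d_def by simp
  have "elt n b ` {0..<k} = elt n a ` {d..<d+k}"
  proof (intro equalityI subsetI)
    fix z assume "z \<in> elt n b ` {0..<k}"
    then obtain j where j: "j < k" "z = elt n b j" by auto
    then show "z \<in> elt n a ` {d..<d+k}" using e by (auto intro!: image_eqI[of _ _ "d+j"])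
  next
    fix z assume "z \<in> elt n a ` {d..<d+k}"
    then obtain q where q: "d \<le> q" "q < d+k" "z = elt n a q" by auto
    then have "z = elt n b (q - d)" using e by simp
    then show "z \<in> elt n b ` {0..<k}" using q by auto
  qed
  then show ?thesis using cyc_elt[of b k n] an d_def by auto
qed

lemma cyc_int:
  assumes an: "a \<in> {1..n}" "b \<in> {1..n}" and d: "2 \<le> tpos n a b" "tpos n a b \<le> n - 2"
  shows "card (cyc k n a \<inter> cyc k n b) \<le> k - 2"
proof -
  define d where "d = tpos n a b"
  have "cyc k n a \<inter> cyc k n b \<subseteq> elt n a ` ({d..<k} \<union> {n..<d+k})"
  proof
    fix z assume z: "z \<in> cyc k n a \<inter> cyc k n b"
    then obtain p where p: "p < k" "z = elt n a p" using cyc_elt[of a k n] an by auto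
    obtain q where q: "d \<le> q" "q < d + k" "z = elt n a q" using z cyc_shift[OF an] d_def by auto
    have pq: "p mod n = q mod n" using p q elt_eq_iff by metis
    show "z \<in> elt n a ` ({d..<k} \<union> {n..<d+k})"
    proof (cases "q < n")
      case True
      then have "q = p" using pq p kn by simp
      then show ?thesis using q p by auto
    next
      case False
      then show ?thesis using q by auto
    qed
  qed
  then have "card (cyc k n a \<inter> cyc k n b) \<le> card (elt n a ` ({d..<k} \<union> {n..<d+k}))"
    by (rule card_mono[rotated]) simp
  also have "\<dots> \<le> card ({d..<k} \<union> {n..<d+k})" by (rule card_image_le) simp
  also have "\<dots> \<le> card {d..<k} + card {n..<d+k}" by (rule card_Un_le)
  also have "\<dots> \<le> k - 2" using d d_def kn k2 by auto
  finally show ?thesis .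
qed

lemma far_cyc:
  assumes A: "A \<subseteq> {1..n}" "nonadjacent n A"
  shows "far {1..n} k (cyc k n ` A)"
  unfolding far_def
proof (intro allI impI)
  fix Z x y
  assume H: "Z \<subseteq> {1..n} \<and> card Z = k - 1 \<and> x \<in> {1..n} - Z \<and> y \<in> {1..n} - Z \<and> x \<noteq> y"
  show "insert x Z \<notin> cyc k n ` A \<or> insert y Z \<notin> cyc k n ` A"
  proof (rule ccontr)
    assume "\<not> ?thesis"
    then obtain a b where ab: "a \<in> A" "b \<in> A" "insert x Z = cyc k n a" "insert y Z = cyc k n b" by auto
    have "a \<noteq> b"
    proof
      assume "a = b"
      then have "x \<in> insert y Z" using ab by (metis insertI1)
      then show False using H by auto
    qed
    then have d: "2 \<le> tpos n a b \<and> tpos n a b \<le> n - 2" using nonadj_pos[OF A ab(1,2)] by simp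
    have an: "a \<in> {1..n}" "b \<in> {1..n}" using A ab by auto
    have "Z \<subseteq> cyc k n a \<inter> cyc k n b" using ab by blast
    then have "card Z \<le> card (cyc k n a \<inter> cyc k n b)"
      by (rule card_mono[rotated]) (use cyc_sub[OF an(1), of k] in \<open>auto intro: finite_subset\<close>)
    then show False using cyc_int[OF an] d H k2 by simp
  qed
qed

lemma cyc_inj:
  assumes an: "a \<in> {1..n}" "b \<in> {1..n}" and eq: "cyc k n a = cyc k n b"
  shows "a = b"
proof (rule ccontr)
  assume ne: "a \<noteq> b"
  define d where "d = tpos n a b"
  have dn: "d < n" using tpos_lt[of n a b] kn d_def by simp
  have "d \<noteq> 0" using elt_tpos[OF an] elt_0[OF an(1)] ne d_def by metis
  define q where "q = d + min (k - 1) (n - d - 1)"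
  have q: "d \<le> q" "q < d + k" "q < n" "k \<le> q" using \<open>d \<noteq> 0\<close> dn k2 kn q_def by auto
  have "elt n a q \<in> cyc k n b" using cyc_shift[OF an] q d_def by auto
  then have "elt n a q \<in> elt n a ` {0..<k}" using eq cyc_elt[of a k n] an by auto
  then obtain p where p: "p < k" "elt n a q = elt n a p" by auto
  then have "q mod n = p mod n" using elt_eq_iff by metis
  then have "q = p" using p q kn by simp
  then show False using p q by simp
qed


definition Ineck :: "nat set \<Rightarrow> nat \<Rightarrow> nat set" where
  "Ineck A i = (if i \<in> A then gap n k i else cyc k n i)"

lemma neck_step:
  assumes i: "i \<in> {1..n}" and S: "S \<subseteq> {0..<n}" "0 \<in> S" and m: "m < n"
    and T: "Suc ` T = insert m (S - {0})"
  shows "elt n (nxt n i) ` T = (elt n i ` S - {i}) \<union> {elt n i m}"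
proof -
  have "elt n (nxt n i) ` T = elt n i ` (Suc ` T)" using elt_nxt[OF i] by (auto simp: image_image)
  also have "\<dots> = insert (elt n i m) (elt n i ` (S - {0}))" using T by simp
  also have "elt n i ` (S - {0}) = elt n i ` S - elt n i ` {0}"
    by (rule inj_on_image_set_diff[OF elt_inj[OF i]]) (use S m in auto)
  finally show ?thesis using elt_0[OF i] by auto
qed

lemma Ineck_sub: "i \<in> {1..n} \<Longrightarrow> Ineck A i \<subseteq> {1..n}"
  unfolding Ineck_def using cyc_sub gap_sub by auto

lemma card_Ineck: "i \<in> {1..n} \<Longrightarrow> card (Ineck A i) = k"
  unfolding Ineck_def using card_cyc[of i n k] card_gap[of i n k] k2 kn by auto

lemma necklace:
  assumes A: "A \<subseteq> {1..n}" "nonadjacent n A"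
  shows "grassmann_necklace n k (Ineck A)"
  unfolding grassmann_necklace_def
proof (intro conjI ballI impI)
  fix i assume i: "i \<in> {1..n}"
  show "Ineck A i \<subseteq> {1..n}" using Ineck_sub[OF i] .
  show "card (Ineck A i) = k" using card_Ineck[OF i] .
  show "Ineck A (nxt n i) = Ineck A i" if "i \<notin> Ineck A i"
  proof -
    have "i \<in> Ineck A i"
      unfolding Ineck_def gap_def using cyc_elt[of i k n] elt_0[OF i] i k2
      by (auto simp: image_iff intro: bexI[of _ 0])
    then show ?thesis using that by simp
  qed
  show "\<exists>j. Ineck A (nxt n i) = Ineck A i - {i} \<union> {j}"
  proof -
    have ci: "cyc k n i = elt n i ` {0..<k}" using cyc_elt i by auto
    have cs: "cyc k n (nxt n i) = elt n (nxt n i) ` {0..<k}" using cyc_elt[of "nxt n i"] by (auto simp: nxt_def)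
    have not2: "\<not> (i \<in> A \<and> nxt n i \<in> A)" using A unfolding nonadjacent_def by auto
    show ?thesis
    proof (cases "i \<in> A")
      case True
      then have "nxt n i \<notin> A" using not2 by auto
      then have "Ineck A (nxt n i) = elt n (nxt n i) ` {0..<k}" using cs Ineck_def by simp
      also have "\<dots> = (elt n i ` (insert k {0..<k-1}) - {i}) \<union> {elt n i (k - 1)}"
        by (rule neck_step[OF i]) (use k2 kn in \<open>auto simp: image_iff\<close>)
      finally show ?thesis using True unfolding Ineck_def gap_def by auto
    next
      case False
      note F = False
      show ?thesis
      proof (cases "nxt n i \<in> A")
        case True
        then have "Ineck A (nxt n i) = elt n (nxt n i) ` (insert k {0..<k-1})" by (simp add: Ineck_def gap_def)
        also have "\<dots> = (elt n i ` {0..<k} - {i}) \<union> {elt n i (k + 1)}"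
          by (rule neck_step[OF i]) (use k2 kn in \<open>auto simp: image_iff\<close>)
        finally show ?thesis using F ci unfolding Ineck_def by auto
      next
        case False
        then have "Ineck A (nxt n i) = elt n (nxt n i) ` {0..<k}" using cs Ineck_def by simp
        also have "\<dots> = (elt n i ` {0..<k} - {i}) \<union> {elt n i k}"
          by (rule neck_step[OF i]) (use k2 kn in \<open>auto simp: image_iff\<close>)
        finally show ?thesis using F ci unfolding Ineck_def by auto
      qed
    qed
  qed
qed


lemma BA_eq:
  assumes A: "A \<subseteq> {1..n}"
  shows "relax {1..n} k (cyc k n ` A) =
    {J. J \<subseteq> {1..n} \<and> card J = k \<and> (\<forall>t\<in>{1..n}. gale_le n t (Ineck A t) J)}"
proof -
  have "(\<forall>t\<in>{1..n}. gale_le n t (Ineck A t) J) \<longleftrightarrow> J \<notin> cyc k n ` A"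
    if J: "J \<subseteq> {1..n}" "card J = k" for J
  proof
    assume H: "\<forall>t\<in>{1..n}. gale_le n t (Ineck A t) J"
    show "J \<notin> cyc k n ` A"
    proof
      assume "J \<in> cyc k n ` A"
      then obtain a where a: "a \<in> A" "J = cyc k n a" by auto
      have an: "a \<in> {1..n}" using a A by auto
      have "gale_le n a (gap n k a) J" using bspec[OF H an] a(1) unfolding Ineck_def by simp
      then have "J \<noteq> cyc k n a" using gale_gap[OF an J] k2 kn by simp
      then show False using a by simp
    qed
  next
    assume H: "J \<notin> cyc k n ` A"
    show "\<forall>t\<in>{1..n}. gale_le n t (Ineck A t) J"
    proof
      fix t assume t: "t \<in> {1..n}"
      show "gale_le n t (Ineck A t) J"
      proof (cases "t \<in> A")
        case True
        then show ?thesis using gale_gap[OF t J] k2 kn H by (auto simp: Ineck_def)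
      next
        case False
        then show ?thesis using gale_cyc[OF t J] kn by (simp add: Ineck_def)
      qed
    qed
  qed
  then show ?thesis unfolding relax_def by auto
qed

lemma BA_good:
  assumes A: "A \<subseteq> {1..n}" "nonadjacent n A"
  shows "positroid n k (relax {1..n} k (cyc k n ` A)) \<and> sparse_paving {1..n} k (relax {1..n} k (cyc k n ` A))"
proof -
  have "matroid_bases {1..n} (relax {1..n} k (cyc k n ` A)) \<and> sparse_paving {1..n} k (relax {1..n} k (cyc k n ` A))"
    by (rule relax_sparse[OF _ _ _ far_cyc[OF A]]) (use k2 kn in auto)
  then show ?thesis unfolding positroid_def using necklace[OF A] BA_eq[OF A(1)] by blast
qed

lemma Ineck_in:
  assumes A: "A \<subseteq> {1..n}" "nonadjacent n A" and i: "i \<in> {1..n}"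
  shows "Ineck A i \<in> relax {1..n} k (cyc k n ` A)"
proof -
  have "Ineck A i \<notin> cyc k n ` A"
  proof (cases "i \<in> A")
    case False
    then show ?thesis using cyc_inj[OF _ i] A(1) by (auto simp: Ineck_def)
  next
    case True
    define Z where "Z = elt n i ` {0..<k-1}"
    define x where "x = elt n i (k - 1)"
    define y where "y = elt n i k"
    have inj: "inj_on (elt n i) {0..<n}" using elt_inj[OF i] .
    have Zs: "Z \<subseteq> {1..n}" using elt_range[of n i] kn Z_def by auto
    have "inj_on (elt n i) {0..<k-1}" by (rule inj_on_subset[OF inj]) (use kn in auto)
    then have cZ: "card Z = k - 1" unfolding Z_def by (simp add: card_image)
    have xZ: "x \<notin> Z"
    proof
      assume "x \<in> Z"
      then obtain p where p: "p < k - 1" "elt n i (k - 1) = elt n i p" by (auto simp: Z_def x_def)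
      have "k - 1 = p" by (rule inj_onD[OF inj p(2)]) (use p kn in auto)
      then show False using p by simp
    qed
    have yZ: "y \<notin> Z"
    proof
      assume "y \<in> Z"
      then obtain p where p: "p < k - 1" "elt n i k = elt n i p" by (auto simp: Z_def y_def)
      have "k = p" by (rule inj_onD[OF inj p(2)]) (use p kn in auto)
      then show False using p by simp
    qed
    have xy: "x \<noteq> y"
    proof
      assume "x = y"
      then have "elt n i (k - 1) = elt n i k" by (simp add: x_def y_def)
      then have "k - 1 = k" by (rule inj_onD[OF inj]) (use kn in auto)
      then show False using k2 by simp
    qed
    have xn: "x \<in> {1..n}" "y \<in> {1..n}" using elt_range[of n i] kn x_def y_def by auto
    have "{0..<k} = insert (k - 1) {0..<k-1}" using k2 by auto
    then have e1: "insert x Z = cyc k n i"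
      unfolding Z_def x_def using cyc_elt[of i k n] i by simp
    have e2: "insert y Z = gap n k i" unfolding Z_def y_def gap_def by simp
    have "insert x Z \<notin> cyc k n ` A \<or> insert y Z \<notin> cyc k n ` A"
      using far_cyc[OF A, unfolded far_def, rule_format, of Z x y] Zs cZ xZ yZ xy xn by blast
    then show ?thesis using e1 e2 True by (auto simp: Ineck_def)
  qed
  then show ?thesis unfolding relax_def using Ineck_sub[OF i] card_Ineck[OF i] by auto
qed


lemma neck_of:
  assumes A: "A \<subseteq> {1..n}" "nonadjacent n A" and i: "i \<in> {1..n}"
  shows "necklace_of n (relax {1..n} k (cyc k n ` A)) i = Ineck A i"
  unfolding necklace_of_def
proof (rule the_equality)
  let ?B = "relax {1..n} k (cyc k n ` A)"
  have all: "\<forall>J\<in>?B. gale_le n i (Ineck A i) J" using BA_eq[OF A(1)] i by auto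
  show "Ineck A i \<in> ?B \<and> (\<forall>J\<in>?B. gale_le n i (Ineck A i) J)"
    using Ineck_in[OF A i] all by blast
  fix I assume H: "I \<in> ?B \<and> (\<forall>J\<in>?B. gale_le n i I J)"
  have "gale_le n i I (Ineck A i)" using H Ineck_in[OF A i] by blast
  moreover have "gale_le n i (Ineck A i) I" using H all by blast
  moreover have "I \<subseteq> {1..n}" using H unfolding relax_def by auto
  ultimately show "I = Ineck A i" using gale_antisym[OF i _ Ineck_sub[OF i]] by blast
qed

lemma g_BA:
  assumes A: "A \<subseteq> {1..n}" "nonadjacent n A"
  shows "{i\<in>{1..n}. necklace_of n (relax {1..n} k (cyc k n ` A)) i \<noteq> cyc k n i} = A"
proof -
  have eqv: "necklace_of n (relax {1..n} k (cyc k n ` A)) i \<noteq> cyc k n i \<longleftrightarrow> i \<in> A"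
    if i: "i \<in> {1..n}" for i
  proof (cases "i \<in> A")
    case False
    then show ?thesis using neck_of[OF A i] by (simp add: Ineck_def)
  next
    case True
    have inj: "inj_on (elt n i) {0..<n}" using elt_inj[OF i] .
    have "elt n i k \<in> gap n k i" unfolding gap_def by simp
    moreover have "elt n i k \<notin> cyc k n i"
    proof
      assume "elt n i k \<in> cyc k n i"
      then obtain p where p: "p < k" "elt n i k = elt n i p" using cyc_elt[of i k n] i by auto
      have "k = p" by (rule inj_onD[OF inj p(2)]) (use p kn in auto)
      then show False using p by simp
    qed
    ultimately show ?thesis using neck_of[OF A i] True by (auto simp: Ineck_def)
  qed
  show ?thesis
  proof (intro set_eqI)
    fix i show "i \<in> {i\<in>{1..n}. necklace_of n (relax {1..n} k (cyc k n ` A)) i \<noteq> cyc k n i} \<longleftrightarrow> i \<in> A"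
      using eqv[of i] A(1) by blast
  qed
qed

lemma adj_cyc:
  assumes a: "a \<in> {1..n}"
  shows "\<exists>Z x y. Z \<subseteq> {1..n} \<and> card Z = k - 1 \<and> x \<in> {1..n} - Z \<and> y \<in> {1..n} - Z \<and> x \<noteq> y
     \<and> insert x Z = cyc k n a \<and> insert y Z = cyc k n (nxt n a)"
proof -
  define Z where "Z = elt n a ` {1..<k}"
  define x where "x = elt n a 0"
  define y where "y = elt n a k"
  have inj: "inj_on (elt n a) {0..<n}" using elt_inj[OF a] .
  have Zs: "Z \<subseteq> {1..n}" using elt_range[of n a] kn Z_def by auto
  have "inj_on (elt n a) {1..<k}" by (rule inj_on_subset[OF inj]) (use kn in auto)
  then have cZ: "card Z = k - 1" unfolding Z_def by (simp add: card_image)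
  have xZ: "x \<notin> Z"
  proof
    assume "x \<in> Z"
    then obtain p where p: "1 \<le> p" "p < k" "elt n a 0 = elt n a p" by (auto simp: Z_def x_def)
    have "0 = p" by (rule inj_onD[OF inj p(3)]) (use p kn in auto)
    then show False using p by simp
  qed
  have yZ: "y \<notin> Z"
  proof
    assume "y \<in> Z"
    then obtain p where p: "p < k" "elt n a k = elt n a p" by (auto simp: Z_def y_def)
    have "k = p" by (rule inj_onD[OF inj p(2)]) (use p kn in auto)
    then show False using p by simp
  qed
  have xy: "x \<noteq> y"
  proof
    assume "x = y"
    then have "elt n a 0 = elt n a k" by (simp add: x_def y_def)
    then have "0 = k" by (rule inj_onD[OF inj]) (use kn in auto)
    then show False using k2 by simp
  qed
  have xn: "x \<in> {1..n}" "y \<in> {1..n}" using elt_range[of n a] kn x_def y_def by auto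
  have "{0..<k} = insert 0 {1..<k}" using k2 by auto
  then have e1: "insert x Z = cyc k n a"
    unfolding Z_def x_def using cyc_elt[of a k n] a by simp
  have na: "nxt n a \<in> {1..n}" using a kn by (auto simp: nxt_def)
  have "cyc k n (nxt n a) = elt n (nxt n a) ` {0..<k}" using cyc_elt[of "nxt n a" k n] na by simp
  also have "\<dots> = (\<lambda>x. elt n a (Suc x)) ` {0..<k}" by (intro image_cong refl) (simp add: elt_nxt[OF a])
  also have "\<dots> = elt n a ` (Suc ` {0..<k})" by (simp only: image_image)
  also have "Suc ` {0..<k} = insert k {1..<k}" using k2 by (auto simp: image_Suc_atLeastLessThan)
  finally have e2: "insert y Z = cyc k n (nxt n a)" unfolding Z_def y_def by simp
  show ?thesis using Zs cZ xZ yZ xy xn e1 e2 by blast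
qed

lemma conv:
  assumes pos: "positroid n k B" and sp: "sparse_paving {1..n} k B"
  shows "\<exists>A. A \<subseteq> {1..n} \<and> nonadjacent n A \<and> B = relax {1..n} k (cyc k n ` A)"
proof -
  obtain I where I: "grassmann_necklace n k I"
    and Beq: "B = {J. J \<subseteq> {1..n} \<and> card J = k \<and> (\<forall>t\<in>{1..n}. gale_le n t (I t) J)}"
    using pos unfolding positroid_def by blast
  have mb: "matroid_bases {1..n} B" using pos unfolding positroid_def by blast
  have cB: "\<forall>Y\<in>B. card Y = k" using Beq by auto
  have sf: "insert x Z \<in> B \<or> insert y Z \<in> B"
    if "Z \<subseteq> {1..n}" "card Z = k - 1" "x \<in> {1..n} - Z" "y \<in> {1..n} - Z" "x \<noteq> y" for Z x y
    by (rule sparse_far[OF _ mb cB sp]) (use that k2 kn in auto)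
  have nb: "\<exists>t\<in>{1..n}. J = cyc k n t"
    if J: "J \<subseteq> {1..n}" "card J = k" "J \<notin> B" for J
  proof -
    obtain t where t: "t \<in> {1..n}" "\<not> gale_le n t (I t) J" using J Beq by blast
    show ?thesis
    proof (rule ccontr)
      assume "\<not> ?thesis"
      then have ne: "J \<noteq> cyc k n t" using t by blast
      have "\<exists>j\<in>J. \<exists>x\<in>{1..n} - J. gale_le n t (insert x (J - {j})) J"
        by (rule gale_swap[OF t(1) J(1,2) _ ne]) (use kn in simp)
      then obtain j x where jx: "j \<in> J" "x \<in> {1..n} - J" "gale_le n t (insert x (J - {j})) J"
        by blast
      have fJ: "finite J" using J finite_subset by blast
      have "card (J - {j}) = k - 1" using J jx fJ by simp
      then have "insert j (J - {j}) \<in> B \<or> insert x (J - {j}) \<in> B"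
        by (intro sf) (use J jx in auto)
      moreover have "insert j (J - {j}) = J" using jx by auto
      ultimately have "insert x (J - {j}) \<in> B" using J by auto
      then have "gale_le n t (I t) (insert x (J - {j}))" using Beq t(1) by blast
      then have "gale_le n t (I t) J" using jx gale_trans by blast
      then show False using t by simp
    qed
  qed
  define A where "A = {a \<in> {1..n}. cyc k n a \<notin> B}"
  have BsubE: "\<forall>Y\<in>B. Y \<subseteq> {1..n}" using mb unfolding matroid_bases_def by (elim conjE)
  have BA: "B = relax {1..n} k (cyc k n ` A)"
  proof (intro equalityI subsetI)
    fix Y assume Y: "Y \<in> B"
    have "Y \<notin> cyc k n ` A"
    proof
      assume "Y \<in> cyc k n ` A"
      then obtain a where "a \<in> A" "Y = cyc k n a" by blast
      then have "cyc k n a \<notin> B" unfolding A_def by blast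
      then show False using Y \<open>Y = cyc k n a\<close> by simp
    qed
    then show "Y \<in> relax {1..n} k (cyc k n ` A)"
      unfolding relax_def using Y BsubE cB by blast
  next
    fix Y assume Y: "Y \<in> relax {1..n} k (cyc k n ` A)"
    then have Y': "Y \<subseteq> {1..n}" "card Y = k" "Y \<notin> cyc k n ` A" unfolding relax_def by auto
    show "Y \<in> B"
    proof (rule ccontr)
      assume nY: "Y \<notin> B"
      then obtain t where t: "t \<in> {1..n}" "Y = cyc k n t" using nb Y' by blast
      then have "t \<in> A" unfolding A_def using nY by blast
      then show False using Y' t by blast
    qed
  qed
  have noadj: "\<not> (a \<in> A \<and> nxt n a \<in> A)" if a: "a \<in> {1..n}" for a
  proof
    assume H: "a \<in> A \<and> nxt n a \<in> A"
    obtain Z x y where Zxy: "Z \<subseteq> {1..n}" "card Z = k - 1" "x \<in> {1..n} - Z" "y \<in> {1..n} - Z" "x \<noteq> y"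
      and e: "insert x Z = cyc k n a" "insert y Z = cyc k n (nxt n a)" using adj_cyc[OF a] by blast
    have "insert x Z \<in> B \<or> insert y Z \<in> B" by (rule sf[OF Zxy])
    then have "cyc k n a \<in> B \<or> cyc k n (nxt n a) \<in> B" using e by simp
    then show False using H unfolding A_def by auto
  qed
  have "nonadjacent n A"
    unfolding nonadjacent_def
  proof (intro ballI conjI)
    fix a assume a: "a \<in> A"
    then have an: "a \<in> {1..n}" unfolding A_def by auto
    show "nxt n a \<notin> A" using noadj[OF an] a by blast
    have pn: "prv n a \<in> {1..n}" using an by (auto simp: prv_def)
    have "nxt n (prv n a) = a" using an by (auto simp: prv_def nxt_def)
    then show "prv n a \<notin> A" using noadj[OF pn] a by auto
  qed
  moreover have "A \<subseteq> {1..n}" unfolding A_def by auto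
  ultimately show ?thesis using BA by blast
qed

end

theorem corollary3p3:
  fixes n k :: nat
  assumes "2 \<le> k" and "k + 2 \<le> n"
  shows "bij_betw (\<lambda>\<B>. {i\<in>{1..n}. necklace_of n \<B> i \<noteq> cyc k n i})
           {\<B>. positroid n k \<B> \<and> sparse_paving {1..n} k \<B>}
           {A. A \<subseteq> {1..n} \<and> nonadjacent n A}"
proof (rule bij_betw_byWitness[where f' = "\<lambda>A. relax {1..n} k (cyc k n ` A)"])
  show "\<forall>B\<in>{\<B>. positroid n k \<B> \<and> sparse_paving {1..n} k \<B>}.
     relax {1..n} k (cyc k n ` {i\<in>{1..n}. necklace_of n B i \<noteq> cyc k n i}) = B"
  proof
    fix B assume "B \<in> {\<B>. positroid n k \<B> \<and> sparse_paving {1..n} k \<B>}"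
    then obtain A where A: "A \<subseteq> {1..n}" "nonadjacent n A" "B = relax {1..n} k (cyc k n ` A)"
      using conv[OF assms] by blast
    then show "relax {1..n} k (cyc k n ` {i\<in>{1..n}. necklace_of n B i \<noteq> cyc k n i}) = B"
      using g_BA[OF assms A(1,2)] by simp
  qed
  show "\<forall>A\<in>{A. A \<subseteq> {1..n} \<and> nonadjacent n A}.
     {i\<in>{1..n}. necklace_of n (relax {1..n} k (cyc k n ` A)) i \<noteq> cyc k n i} = A"
    using g_BA[OF assms] by blast
  show "(\<lambda>\<B>. {i\<in>{1..n}. necklace_of n \<B> i \<noteq> cyc k n i}) `
      {\<B>. positroid n k \<B> \<and> sparse_paving {1..n} k \<B>} \<subseteq> {A. A \<subseteq> {1..n} \<and> nonadjacent n A}"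
  proof
    fix X assume "X \<in> (\<lambda>\<B>. {i\<in>{1..n}. necklace_of n \<B> i \<noteq> cyc k n i}) `
      {\<B>. positroid n k \<B> \<and> sparse_paving {1..n} k \<B>}"
    then obtain B where B: "positroid n k B" "sparse_paving {1..n} k B"
      and X: "X = {i\<in>{1..n}. necklace_of n B i \<noteq> cyc k n i}" by blast
    obtain A where A: "A \<subseteq> {1..n}" "nonadjacent n A" "B = relax {1..n} k (cyc k n ` A)"
      using conv[OF assms B] by blast
    have "X = A" using X A g_BA[OF assms A(1,2)] by simp
    then show "X \<in> {A. A \<subseteq> {1..n} \<and> nonadjacent n A}" using A by simp
  qed
  show "(\<lambda>A. relax {1..n} k (cyc k n ` A)) ` {A. A \<subseteq> {1..n} \<and> nonadjacent n A}
      \<subseteq> {\<B>. positroid n k \<B> \<and> sparse_paving {1..n} k \<B>}"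
    using BA_good[OF assms] by blast
qed

end
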